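(* For the graph orientation problem on bipartite graphs with arbitrary query costs, \textsc{BestVC} is $\frac43$-competitive, i.e., $\mathbb E[\textsc{BestVC}]\le\frac43\mathbb E[\mathrm{OPT}]$ for every such instance.
   Context: An instance of the graph orientation problem consists of a graph $G=(V,E)$ and, for each vertex $v$, a query cost $c_v\ge0$ and a continuous distribution $d_v$ with minimal support interval $I_v=(\ell_v,r_v)$; it is assumed that for each edge the two intervals intersect and neither contains the other. Weights $w_v\sim d_v$ are independent and querying $v$ reveals $w_v$ at cost $c_v$. For a realization, $Q$ is a feasible query set if knowing $w_u$ for $u\in Q$ and only the intervals for unqueried vertices suffices to identify, for every edge, its endpoint of minimum weight; $\mathbb E[\mathrm{OPT}]$ is the expected minimum cost of a feasible query set. A vertex is mandatory if it belongs to every feasible query set; $p_v$ is the probability that $v$ is mandatory. A vertex cover-based algorithm first queries a vertex cover $VC$ of $G$ and then queries all vertices of $V\setminus VC$ that are mandatory; its expected cost is $\sum_{v\in V}p_vc_v+\sum_{v\in VC}(1-p_v)c_v$. \textsc{BestVC} is the vertex cover-based algorithm whose vertex cover $VC$ minimizes $\sum_{v\in VC}(1-p_v)c_v$ among all vertex covers of $G$. *)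

theory Defs
  imports "HOL-Probability.Probability"
begin

text \<open>The graph has vertex set V and edge set E,
  given as ordered pairs (each undirected edge may be listed in either or both
  orientations). Vertex v has open uncertainty interval from l v to r v.\<close>

definition bipartite :: "'a set \<Rightarrow> ('a \<times> 'a) set \<Rightarrow> bool" where
  "bipartite V E \<longleftrightarrow> (\<exists>A \<subseteq> V. \<forall>(u, v) \<in> E. (u \<in> A \<longleftrightarrow> v \<notin> A))"

definition vertex_cover :: "'a set \<Rightarrow> ('a \<times> 'a) set \<Rightarrow> 'a set \<Rightarrow> bool" where
  "vertex_cover V E C \<longleftrightarrow> C \<subseteq> V \<and> (\<forall>(u, v) \<in> E. u \<in> C \<or> v \<in> C)"

definition consistent ::
  "'a set \<Rightarrow> ('a \<Rightarrow> real) \<Rightarrow> ('a \<Rightarrow> real) \<Rightarrow> ('a \<Rightarrow> real) \<Rightarrow> 'a set \<Rightarrow> ('a \<Rightarrow> real) \<Rightarrow> bool" where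
  "consistent V l r w Q w' \<longleftrightarrow>
     (\<forall>y \<in> V. if y \<in> Q then w' y = w y else w' y \<in> {l y<..<r y})"

definition feasible ::
  "'a set \<Rightarrow> ('a \<times> 'a) set \<Rightarrow> ('a \<Rightarrow> real) \<Rightarrow> ('a \<Rightarrow> real) \<Rightarrow> ('a \<Rightarrow> real) \<Rightarrow> 'a set \<Rightarrow> bool" where
  "feasible V E l r w Q \<longleftrightarrow> Q \<subseteq> V \<and>
     (\<forall>(u, v) \<in> E.
        (\<forall>w'. consistent V l r w Q w' \<longrightarrow> w' u \<le> w' v) \<or>
        (\<forall>w'. consistent V l r w Q w' \<longrightarrow> w' v \<le> w' u))"

definition opt_cost ::
  "'a set \<Rightarrow> ('a \<times> 'a) set \<Rightarrow> ('a \<Rightarrow> real) \<Rightarrow> ('a \<Rightarrow> real) \<Rightarrow> ('a \<Rightarrow> real) \<Rightarrow> ('a \<Rightarrow> real) \<Rightarrow> real" where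
  "opt_cost V E l r c w = Min ((\<lambda>Q. sum c Q) ` {Q. feasible V E l r w Q})"

definition mandatory ::
  "'a set \<Rightarrow> ('a \<times> 'a) set \<Rightarrow> ('a \<Rightarrow> real) \<Rightarrow> ('a \<Rightarrow> real) \<Rightarrow> ('a \<Rightarrow> real) \<Rightarrow> 'a \<Rightarrow> bool" where
  "mandatory V E l r w v \<longleftrightarrow> v \<in> V \<and> (\<forall>Q. feasible V E l r w Q \<longrightarrow> v \<in> Q)"

definition mand_prob ::
  "'a set \<Rightarrow> ('a \<times> 'a) set \<Rightarrow> ('a \<Rightarrow> real) \<Rightarrow> ('a \<Rightarrow> real) \<Rightarrow> ('a \<Rightarrow> real measure) \<Rightarrow> 'a \<Rightarrow> real" where
  "mand_prob V E l r d v =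
     measure (PiM V d) {w \<in> space (PiM V d). mandatory V E l r w v}"

definition vc_alg_cost ::
  "'a set \<Rightarrow> ('a \<times> 'a) set \<Rightarrow> ('a \<Rightarrow> real) \<Rightarrow> ('a \<Rightarrow> real) \<Rightarrow> ('a \<Rightarrow> real) \<Rightarrow> 'a set \<Rightarrow> ('a \<Rightarrow> real) \<Rightarrow> real" where
  "vc_alg_cost V E l r c C w = sum c C + sum c {v \<in> V - C. mandatory V E l r w v}"

definition bestvc_cover ::
  "'a set \<Rightarrow> ('a \<times> 'a) set \<Rightarrow> ('a \<Rightarrow> real) \<Rightarrow> ('a \<Rightarrow> real) \<Rightarrow> ('a \<Rightarrow> real) \<Rightarrow> ('a \<Rightarrow> real measure) \<Rightarrow> 'a set \<Rightarrow> bool" where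
  "bestvc_cover V E l r c d C \<longleftrightarrow> vertex_cover V E C \<and>
     (\<forall>C'. vertex_cover V E C' \<longrightarrow>
        (\<Sum>v\<in>C. (1 - mand_prob V E l r d v) * c v) \<le> (\<Sum>v\<in>C'. (1 - mand_prob V E l r d v) * c v))"

end

theory Submission
  imports Defs
begin


locale GO =
  fixes V :: "'a set" and E :: "('a \<times> 'a) set" and l r :: "'a \<Rightarrow> real"
  assumes finV: "finite V"
  and edges: "\<forall>(u, v) \<in> E. u \<in> V \<and> v \<in> V \<and> u \<noteq> v"
  and lr: "\<forall>v \<in> V. l v < r v"
  and ovl: "\<forall>(u, v) \<in> E. {l u<..<r u} \<inter> {l v<..<r v} \<noteq> {}"
begin

definition nb :: "'a \<Rightarrow> 'a set" where
  "nb v = {u. (u, v) \<in> E \<or> (v, u) \<in> E}"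

lemma nb_sub: "nb v \<subseteq> V" using edges unfolding nb_def by auto

lemma finite_nb: "finite (nb v)" using nb_sub finV by (rule finite_subset)

lemma bad_edge:
  assumes ab: "a \<noteq> b" "a \<in> V" "b \<in> V" and ov: "{l a<..<r a} \<inter> {l b<..<r b} \<noteq> {}"
    and bQ: "b \<notin> Q" and aQ: "a \<in> Q \<longrightarrow> w a \<in> {l b<..<r b}"
  shows "\<exists>w1 w2. consistent V l r w Q w1 \<and> consistent V l r w Q w2 \<and> w1 b < w1 a \<and> w2 a < w2 b"
proof (cases "a \<in> Q")
  case True
  then have wa: "l b < w a" "w a < r b" using aQ by auto
  define w1 where "w1 = (\<lambda>y. if y \<in> Q then w y else if y = b then (l b + w a)/2 else (l y + r y)/2)"
  define w2 where "w2 = (\<lambda>y. if y \<in> Q then w y else if y = b then (r b + w a)/2 else (l y + r y)/2)"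
  have "consistent V l r w Q w1" "consistent V l r w Q w2"
    unfolding consistent_def w1_def w2_def using wa lr by auto
  moreover have "w1 b < w1 a" "w2 a < w2 b" using wa True bQ unfolding w1_def w2_def by auto
  ultimately show ?thesis by blast
next
  case False
  have m: "max (l a) (l b) < min (r a) (r b)"
  proof -
    obtain x where "x \<in> {l a<..<r a} \<inter> {l b<..<r b}" using ov by blast
    then show ?thesis by auto
  qed
  define p where "p = (2 * max (l a) (l b) + min (r a) (r b)) / 3"
  define q where "q = (max (l a) (l b) + 2 * min (r a) (r b)) / 3"
  have pq: "l a < p" "l b < p" "p < q" "q < r a" "q < r b" using m unfolding p_def q_def by auto
  define w1 where "w1 = (\<lambda>y. if y \<in> Q then w y else if y = b then p else if y = a then q else (l y + r y)/2)"
  define w2 where "w2 = (\<lambda>y. if y \<in> Q then w y else if y = b then q else if y = a then p else (l y + r y)/2)"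
  have "consistent V l r w Q w1" "consistent V l r w Q w2"
    unfolding consistent_def w1_def w2_def using pq lr by auto
  moreover have "w1 b < w1 a" "w2 a < w2 b" using pq False bQ ab unfolding w1_def w2_def by auto
  ultimately show ?thesis by blast
qed

lemma feasible_edge:
  assumes f: "feasible V E l r w Q" and e: "(a, b) \<in> E \<or> (b, a) \<in> E"
  shows "\<not> (b \<notin> Q \<and> (a \<in> Q \<longrightarrow> w a \<in> {l b<..<r b}))"
proof
  assume h: "b \<notin> Q \<and> (a \<in> Q \<longrightarrow> w a \<in> {l b<..<r b})"
  have ab: "a \<noteq> b" "a \<in> V" "b \<in> V" "{l a<..<r a} \<inter> {l b<..<r b} \<noteq> {}"
    using e edges ovl by auto
  obtain w1 w2 where w: "consistent V l r w Q w1" "consistent V l r w Q w2" "w1 b < w1 a" "w2 a < w2 b"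
    using bad_edge[OF ab] h by blast
  from e show False
  proof
    assume "(a, b) \<in> E"
    then have "(\<forall>w'. consistent V l r w Q w' \<longrightarrow> w' a \<le> w' b) \<or> (\<forall>w'. consistent V l r w Q w' \<longrightarrow> w' b \<le> w' a)"
      using f unfolding feasible_def by auto
    then show False using w by force
  next
    assume "(b, a) \<in> E"
    then have "(\<forall>w'. consistent V l r w Q w' \<longrightarrow> w' b \<le> w' a) \<or> (\<forall>w'. consistent V l r w Q w' \<longrightarrow> w' a \<le> w' b)"
      using f unfolding feasible_def by auto
    then show False using w by force
  qed
qed

lemma mand_char:
  "mandatory V E l r w v \<longleftrightarrow> v \<in> V \<and> (\<exists>u\<in>nb v. w u \<in> {l v<..<r v})"
proof
  assume m: "mandatory V E l r w v"
  show "v \<in> V \<and> (\<exists>u\<in>nb v. w u \<in> {l v<..<r v})"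
  proof (rule ccontr)
    assume "\<not> ?thesis"
    moreover have vV: "v \<in> V" using m unfolding mandatory_def by auto
    ultimately have nv: "\<forall>u\<in>nb v. w u \<notin> {l v<..<r v}" by auto
    have key: "(\<forall>w'. consistent V l r w (V - {v}) w' \<longrightarrow> w' a \<le> w' b) \<or>
            (\<forall>w'. consistent V l r w (V - {v}) w' \<longrightarrow> w' b \<le> w' a)" if e: "(a, b) \<in> E" for a b
    proof -
      have ab: "a \<in> V" "b \<in> V" "a \<noteq> b" using e edges by auto
      show "(\<forall>w'. consistent V l r w (V - {v}) w' \<longrightarrow> w' a \<le> w' b) \<or>
            (\<forall>w'. consistent V l r w (V - {v}) w' \<longrightarrow> w' b \<le> w' a)"
      proof (cases "a = v")
        case True
        then have "b \<in> nb v" using e unfolding nb_def by auto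
        then have "w b \<le> l v \<or> r v \<le> w b" using nv by force
        then show ?thesis unfolding consistent_def using True ab
          by (smt (verit, ccfv_SIG) Diff_iff greaterThanLessThan_iff singletonD)
      next
        case False
        show ?thesis
        proof (cases "b = v")
          case True
          then have "a \<in> nb v" using e unfolding nb_def by auto
          then have "w a \<le> l v \<or> r v \<le> w a" using nv by force
          then show ?thesis unfolding consistent_def using True ab
            by (smt (verit, ccfv_SIG) Diff_iff greaterThanLessThan_iff singletonD)
        next
          case False
          then show ?thesis unfolding consistent_def using \<open>a \<noteq> v\<close> ab
            by (smt (verit, ccfv_SIG) Diff_iff singletonD)
        qed
      qed
    qed
    have "feasible V E l r w (V - {v})" unfolding feasible_def using key by auto
    then show False using m unfolding mandatory_def by auto
  qed
next
  assume h: "v \<in> V \<and> (\<exists>u\<in>nb v. w u \<in> {l v<..<r v})"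
  then obtain u where u: "u \<in> nb v" "w u \<in> {l v<..<r v}" by auto
  show "mandatory V E l r w v"
    unfolding mandatory_def
  proof (intro conjI allI impI)
    show "v \<in> V" using h by auto
    fix Q assume f: "feasible V E l r w Q"
    show "v \<in> Q"
      using feasible_edge[OF f, of u v] u unfolding nb_def by auto
  qed
qed

definition cover :: "'a set \<Rightarrow> bool" where
  "cover Q \<longleftrightarrow> Q \<subseteq> V \<and> (\<forall>(a, b) \<in> E. a \<in> Q \<or> b \<in> Q)"

lemma feas_char:
  "feasible V E l r w Q \<longleftrightarrow> cover Q \<and> {v. mandatory V E l r w v} \<subseteq> Q"
proof
  assume f: "feasible V E l r w Q"
  have "\<forall>(a, b) \<in> E. a \<in> Q \<or> b \<in> Q"
    using feasible_edge[OF f] by blast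
  moreover have "Q \<subseteq> V" using f unfolding feasible_def by auto
  moreover have "{v. mandatory V E l r w v} \<subseteq> Q" using f unfolding mandatory_def by auto
  ultimately show "cover Q \<and> {v. mandatory V E l r w v} \<subseteq> Q" unfolding cover_def by auto
next
  assume h: "cover Q \<and> {v. mandatory V E l r w v} \<subseteq> Q"
  show "feasible V E l r w Q"
  proof -
  have key: "(\<forall>w'. consistent V l r w Q w' \<longrightarrow> w' a \<le> w' b) \<or>
          (\<forall>w'. consistent V l r w Q w' \<longrightarrow> w' b \<le> w' a)" if e: "(a, b) \<in> E" for a b
  proof -
    have ab: "a \<in> V" "b \<in> V" "a \<noteq> b" "a \<in> Q \<or> b \<in> Q" using e edges h unfolding cover_def by auto
    have nba: "a \<in> nb b" "b \<in> nb a" using e unfolding nb_def by auto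
    show "(\<forall>w'. consistent V l r w Q w' \<longrightarrow> w' a \<le> w' b) \<or>
          (\<forall>w'. consistent V l r w Q w' \<longrightarrow> w' b \<le> w' a)"
    proof (cases "a \<in> Q \<and> b \<in> Q")
      case True
      then show ?thesis unfolding consistent_def using ab by (smt (verit))
    next
      case False
      show ?thesis
      proof (cases "a \<in> Q")
        case True
        then have "b \<notin> Q" using False by auto
        then have "\<not> mandatory V E l r w b" using h by auto
        then have "w a \<le> l b \<or> r b \<le> w a" using mand_char[of w b] nba ab by force
        then show ?thesis unfolding consistent_def using True \<open>b \<notin> Q\<close> ab
          by (smt (verit, ccfv_SIG) greaterThanLessThan_iff)
      next
        case False
        then have "b \<in> Q" using ab by auto
        then have "\<not> mandatory V E l r w a" using h False by auto
        then have "w b \<le> l a \<or> r a \<le> w b" using mand_char[of w a] nba ab by force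
        then show ?thesis unfolding consistent_def using False \<open>b \<in> Q\<close> ab
          by (smt (verit, ccfv_SIG) greaterThanLessThan_iff)
      qed
    qed
  qed
  then show ?thesis unfolding feasible_def using h cover_def by auto
  qed
qed

end



definition xf :: "real \<Rightarrow> real \<Rightarrow> real" where
  "xf p z = (if p = 1 then 1 else (4/3 * z - p) / (1 - p))"

lemma ineq_aux:
  fixes aa bbb ps qt :: real
  assumes "0 < aa" "aa \<le> bbb" "bbb \<le> 1" "0 \<le> ps" "0 \<le> qt" "ps + qt \<ge> aa * bbb"
  shows "((1 - aa) + 4 * ps) / aa + ((1 - bbb) + 4 * qt) / bbb \<ge> 3"
proof -
  have "4 * ps / aa \<ge> 4 * ps / bbb" using assms by (intro divide_left_mono) auto
  have e1: "((1 - aa) + 4 * ps) / aa = 1/aa - 1 + 4* ps/aa" using assms by (simp add: field_simps)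
  have e2: "((1 - bbb) + 4 * qt) / bbb = 1/bbb - 1 + 4* qt/bbb" using assms by (simp add: field_simps)
  have "4* ps/aa + 4* qt/bbb \<ge> 4*(ps+qt)/bbb" using \<open>4 * ps / aa \<ge> 4 * ps / bbb\<close> by (simp add: add_divide_distrib)
  moreover have "4*(ps+qt)/bbb \<ge> 4*(aa* bbb)/bbb" using assms by (intro divide_right_mono) auto
  moreover have "4*(aa* bbb)/bbb = 4* aa" using assms by auto
  moreover have "1/bbb \<ge> 1" using assms by simp
  moreover have "1/aa + 4* aa \<ge> 4"
  proof -
    have "(2* aa - 1)^2 \<ge> 0" by simp
    then have "1 + 4* aa* aa \<ge> 4* aa" by (simp add: power2_eq_square algebra_simps)
    then have "(1 + 4* aa* aa)/aa \<ge> 4* aa/aa" using assms by (intro divide_right_mono) auto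
    then show ?thesis using assms by (simp add: add_divide_distrib)
  qed
  ultimately show ?thesis unfolding e1 e2 by linarith
qed

lemma edge_ineq:
  fixes a b zu zv :: real
  assumes "0 \<le> a" "a \<le> 1" "0 \<le> b" "b \<le> 1" "a \<le> zu" "b \<le> zv" "zu + zv \<ge> 1 + a * b"
  shows "xf a zu + xf b zv \<ge> 1"
proof -
  have nn: "xf p z \<ge> 0" if "p \<le> 1" "p \<le> z" "0 \<le> p" for p z
    using that unfolding xf_def by (auto intro!: divide_nonneg_pos)
  consider "a = 1" | "b = 1" | "a < 1" "b < 1" using assms by linarith
  then show ?thesis
  proof cases
    case 1 then show ?thesis using nn[of b zv] assms unfolding xf_def by auto
  next
    case 2 then show ?thesis using nn[of a zu] assms unfolding xf_def by auto
  next
    case 3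
    define ps where "ps = zu - a"
    define qt where "qt = zv - b"
    have st: "ps + qt \<ge> (1-a)*(1-b)" "ps \<ge> 0" "qt \<ge> 0" using assms unfolding ps_def qt_def by (auto simp: algebra_simps)
    have xa: "xf a zu = ((1 - (1-a)) + 4* ps) / (3*(1-a))" using 3 unfolding xf_def ps_def by (auto simp: field_simps)
    have xb: "xf b zv = ((1 - (1-b)) + 4* qt) / (3*(1-b))" using 3 unfolding xf_def qt_def by (auto simp: field_simps)
    have "((1 - (1-a)) + 4* ps) / (1-a) + ((1 - (1-b)) + 4* qt) / (1-b) \<ge> 3"
    proof (cases "1 - a \<le> 1 - b")
      case True
      then show ?thesis using ineq_aux[of "1-a" "1-b" ps qt] st 3 assms by auto
    next
      case False
      then show ?thesis using ineq_aux[of "1-b" "1-a" qt ps] st 3 assms by (auto simp: mult.commute)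
    qed
    moreover have "((1 - (1-a)) + 4* ps) / (3*(1-a)) + ((1 - (1-b)) + 4* qt) / (3*(1-b))
       = (((1 - (1-a)) + 4* ps) / (1-a) + ((1 - (1-b)) + 4* qt) / (1-b)) / 3" by (simp add: add_divide_distrib mult.commute)
    ultimately show ?thesis unfolding xa xb
    proof -
      fix X Y :: real assume "3 \<le> X" "Y = X / 3" then show "1 \<le> Y" by simp
    qed
  qed
qed




lemma rounding:
  fixes V :: "'a set" and E :: "('a \<times> 'a) set" and A :: "'a set"
    and W x :: "'a \<Rightarrow> real"
  assumes fin: "finite V"
    and ed: "\<forall>(u, v) \<in> E. u \<in> V \<and> v \<in> V \<and> (u \<in> A \<longleftrightarrow> v \<notin> A) \<and> x u + x v \<ge> 1"
    and W: "\<forall>v\<in>V. W v \<ge> 0" and x: "\<forall>v\<in>V. 0 \<le> x v \<and> x v \<le> 1"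
  shows "\<exists>C. C \<subseteq> V \<and> (\<forall>(u, v) \<in> E. u \<in> C \<or> v \<in> C) \<and> sum W C \<le> (\<Sum>v\<in>V. W v * x v)"
proof -
  define Ct where "Ct t = {v\<in>V. (v \<in> A \<and> t \<le> x v) \<or> (v \<notin> A \<and> 1 - t < x v)}" for t :: real
  have cov: "\<forall>(u, v) \<in> E. u \<in> Ct t \<or> v \<in> Ct t" for t
    using ed unfolding Ct_def by fastforce
  define f where "f t = sum W (Ct t)" for t
  define N where "N = restrict_space lborel {0..1::real}"
  interpret N: prob_space N unfolding N_def
    by (rule prob_space_restrict_space) auto
  have spN: "space N = {0..1}" unfolding N_def by (simp add: space_restrict_space)
  define S where "S v = (if v \<in> A then {0..x v} else {1 - x v<..1})" for v
  have Ssets: "S v \<in> sets N" if "v \<in> V" for v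
    using x that unfolding S_def N_def by (auto simp: sets_restrict_space_iff)
  have Smeas: "measure N (S v) = x v" if "v \<in> V" for v
  proof -
    have "measure N (S v) = measure lborel (S v)"
      unfolding N_def using x that by (intro measure_restrict_space) (auto simp: S_def)
    then show ?thesis using x that by (auto simp: S_def)
  qed
  have fS: "f t = (\<Sum>v\<in>V. W v * indicator (S v) t)" if "t \<in> space N" for t
  proof -
    have "f t = (\<Sum>v\<in>V. if v \<in> Ct t then W v else 0)"
      unfolding f_def using fin by (simp add: sum.If_cases Ct_def Int_def)
    also have "\<dots> = (\<Sum>v\<in>V. W v * indicator (S v) t)"
      using that spN unfolding Ct_def S_def by (intro sum.cong) (auto simp: indicator_def)
    finally show ?thesis .
  qed
  have intv: "integrable N (\<lambda>t. W v * indicator (S v) t)" if "v \<in> V" for v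
    using Ssets[OF that] by (intro integrable_mult_right integrable_real_indicator) (auto simp: N.emeasure_space_1 less_top[symmetric])
  have intf: "integral\<^sup>L N f = (\<Sum>v\<in>V. W v * x v)"
  proof -
    have "integral\<^sup>L N f = integral\<^sup>L N (\<lambda>t. \<Sum>v\<in>V. W v * indicator (S v) t)"
      using fS by (intro Bochner_Integration.integral_cong) auto
    also have "\<dots> = (\<Sum>v\<in>V. W v * integral\<^sup>L N (indicator (S v)))"
      using intv by (simp add: integral_sum)
    also have "\<dots> = (\<Sum>v\<in>V. W v * x v)"
      using Ssets Smeas by (intro sum.cong) (auto simp: Int_absorb2 sets.sets_into_space)
    finally show ?thesis .
  qed
  have intgf: "integrable N f"
  proof -
    have "integrable N (\<lambda>t. \<Sum>v\<in>V. W v * indicator (S v) t)"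
      using intv by (rule Bochner_Integration.integrable_sum)
    moreover have "integrable N f \<longleftrightarrow> integrable N (\<lambda>t. \<Sum>v\<in>V. W v * indicator (S v) t)"
      using fS by (intro Bochner_Integration.integrable_cong) auto
    ultimately show ?thesis by simp
  qed
  have finf: "finite (f ` {0..1})"
  proof (rule finite_subset)
    show "f ` {0..1} \<subseteq> sum W ` Pow V" unfolding f_def Ct_def by auto
    show "finite (sum W ` Pow V)" using fin by auto
  qed
  define m where "m = Min (f ` {0..1})"
  have "m \<in> f ` {0..1}" unfolding m_def using finf by (intro Min_in) auto
  then obtain t0 where t0: "t0 \<in> {0..1}" "f t0 = m" by auto
  have "m \<le> integral\<^sup>L N f"
  proof -
    have "integral\<^sup>L N (\<lambda>_. m) \<le> integral\<^sup>L N f"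
      using intgf spN finf unfolding m_def by (intro integral_mono) auto
    then show ?thesis by (simp add: N.prob_space)
  qed
  then show ?thesis using cov t0 intf unfolding f_def
    by (intro exI[of _ "Ct t0"]) (auto simp: Ct_def)
qed




locale GOP = GO V E l r for V :: "'a set" and E l r +
  fixes d :: "'a \<Rightarrow> real measure"
  assumes hd: "\<forall>v \<in> V. prob_space (d v) \<and> sets (d v) = sets borel"
begin

abbreviation "PP \<equiv> PiM V d"

lemma prob_PP: "prob_space PP"
  using hd by (intro prob_space_PiM) auto

lemma coord_sets:
  assumes "x \<in> K" "sets (d x) = sets borel"
  shows "{f\<in>space (PiM K d). f x \<in> {a<..<b::real}} \<in> sets (PiM K d)"
proof -
  have "(\<lambda>f. f x) -` {a<..<b} \<inter> space (PiM K d) \<in> sets (PiM K d)"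
    using assms by (intro measurable_sets[OF measurable_component_singleton]) auto
  moreover have "(\<lambda>f. f x) -` {a<..<b} \<inter> space (PiM K d) = {f\<in>space (PiM K d). f x \<in> {a<..<b::real}}"
    by auto
  ultimately show ?thesis by simp
qed

lemma ex_sets:
  assumes "J \<subseteq> K" "finite J" "J \<subseteq> V"
  shows "{f\<in>space (PiM K d). \<exists>x\<in>J. f x \<in> {a<..<b::real}} \<in> sets (PiM K d)"
  using assms hd by (intro sets.sets_Collect_finite_Ex coord_sets) auto

definition Mset :: "'a \<Rightarrow> ('a \<Rightarrow> real) set" where
  "Mset v = {w\<in>space PP. mandatory V E l r w v}"

lemma Mset_eq: "v \<in> V \<Longrightarrow> Mset v = {w\<in>space PP. \<exists>x\<in>nb v. w x \<in> {l v<..<r v}}"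
  unfolding Mset_def using mand_char by auto

lemma Mset_sets: "Mset v \<in> sets PP"
proof (cases "v \<in> V")
  case True
  then show ?thesis unfolding Mset_eq[OF True] using nb_sub finite_nb by (intro ex_sets) auto
next
  case False
  then have "Mset v = {}" unfolding Mset_def mandatory_def by auto
  then show ?thesis by simp
qed

definition Mw :: "('a \<Rightarrow> real) \<Rightarrow> 'a set" where
  "Mw w = {v\<in>V. mandatory V E l r w v}"

lemma Mw_sub: "Mw w \<subseteq> V" unfolding Mw_def by auto

lemma Mw_meas: "Mw \<in> measurable PP (count_space (Pow V))"
proof (subst measurable_count_space_eq2)
  show "finite (Pow V)" using finV by simp
  show "Mw \<in> space PP \<rightarrow> Pow V \<and> (\<forall>S\<in>Pow V. Mw -` {S} \<inter> space PP \<in> sets PP)"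
  proof (intro conjI ballI)
    show "Mw \<in> space PP \<rightarrow> Pow V" using Mw_sub by auto
    fix S assume S: "S \<in> Pow V"
    have "Mw -` {S} \<inter> space PP = {w\<in>space PP. \<forall>v\<in>V. (w \<in> Mset v \<longleftrightarrow> v \<in> S)}"
      using S unfolding Mw_def Mset_def by auto
    also have "\<dots> \<in> sets PP"
    proof (intro sets.sets_Collect_finite_All finV)
      fix v assume "v \<in> V"
      show "{w\<in>space PP. (w \<in> Mset v \<longleftrightarrow> v \<in> S)} \<in> sets PP"
      proof (cases "v \<in> S")
        case True
        then have "{w\<in>space PP. (w \<in> Mset v \<longleftrightarrow> v \<in> S)} = Mset v" using Mset_def by auto
        then show ?thesis using Mset_sets by simp
      next
        case False
        then have "{w\<in>space PP. (w \<in> Mset v \<longleftrightarrow> v \<in> S)} = space PP - Mset v" using Mset_def by auto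
        then show ?thesis using Mset_sets by auto
      qed
    qed
    finally show "Mw -` {S} \<inter> space PP \<in> sets PP" .
  qed
qed

lemma comp_meas: "(\<lambda>w. h (Mw w) :: real) \<in> borel_measurable PP"
  by (rule measurable_compose[OF Mw_meas]) simp

lemma comp_int: "integrable PP (\<lambda>w. h (Mw w) :: real)"
proof -
  interpret prob_space PP by (rule prob_PP)
  show ?thesis
  proof (rule integrable_const_bound[where B = "\<Sum>S\<in>Pow V. \<bar>h S\<bar>"])
    show "AE x in PP. norm (h (Mw x)) \<le> (\<Sum>S\<in>Pow V. \<bar>h S\<bar>)"
    proof (intro AE_I2)
      fix x
      have "Mw x \<in> Pow V" using Mw_sub by auto
      then show "norm (h (Mw x)) \<le> (\<Sum>S\<in>Pow V. \<bar>h S\<bar>)"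
        using finV by (auto intro: member_le_sum[where f = "\<lambda>S. \<bar>h S\<bar>", of "Mw x" "Pow V", simplified])
    qed
    show "(\<lambda>w. h (Mw w)) \<in> borel_measurable PP" by (rule comp_meas)
  qed
qed

end



context GOP begin

lemma coord_indep: "V \<noteq> {} \<Longrightarrow> prob_space.indep_vars PP d (\<lambda>i w. w i) V"
proof -
  assume ne: "V \<noteq> {}"
  interpret prob_space PP by (rule prob_PP)
  have rv: "random_variable (d i) (\<lambda>w. w i)" if "i \<in> V" for i
    using that by (rule measurable_component_singleton)
  have "distr PP (PiM V d) (\<lambda>x. restrict x V) = distr PP PP (\<lambda>x. x)"
    by (intro distr_cong) (auto simp: space_PiM PiE_restrict)
  also have "\<dots> = PiM V (\<lambda>i. distr PP (d i) (\<lambda>x. x i))"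
    using hd by (simp, intro PiM_cong refl distr_PiM_component[symmetric]) auto
  finally show ?thesis
    by (subst indep_vars_iff_distr_eq_PiM'[OF ne rv]) auto
qed

lemma Mset_indep:
  assumes uv: "u \<in> V" "v \<in> V" and disj: "nb u \<inter> nb v = {}"
  shows "measure PP (Mset u \<inter> Mset v) = measure PP (Mset u) * measure PP (Mset v)"
proof -
  interpret prob_space PP by (rule prob_PP)
  have ne: "V \<noteq> {}" using uv by auto
  have ind: "indep_var (PiM (nb u) d) (\<lambda>\<omega>. restrict (\<lambda>i. \<omega> i) (nb u)) (PiM (nb v) d) (\<lambda>\<omega>. restrict (\<lambda>i. \<omega> i) (nb v))"
    using coord_indep[OF ne] disj nb_sub by (intro indep_var_restrict) auto
  define Xa where "Xa = {f\<in>space (PiM (nb u) d). \<exists>x\<in>nb u. f x \<in> {l u<..<r u}}"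
  define Xb where "Xb = {f\<in>space (PiM (nb v) d). \<exists>x\<in>nb v. f x \<in> {l v<..<r v}}"
  have Xa: "Xa \<in> sets (PiM (nb u) d)" unfolding Xa_def using nb_sub finite_nb by (intro ex_sets) auto
  have Xb: "Xb \<in> sets (PiM (nb v) d)" unfolding Xb_def using nb_sub finite_nb by (intro ex_sets) auto
  have ea: "(\<lambda>\<omega>. restrict (\<lambda>i. \<omega> i) (nb u)) -` Xa \<inter> space PP = Mset u"
    unfolding Mset_eq[OF uv(1)] Xa_def using nb_sub by (auto simp: space_PiM PiE_iff extensional_def)
  have eb: "(\<lambda>\<omega>. restrict (\<lambda>i. \<omega> i) (nb v)) -` Xb \<inter> space PP = Mset v"
    unfolding Mset_eq[OF uv(2)] Xb_def using nb_sub by (auto simp: space_PiM PiE_iff extensional_def)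
  have eab: "(\<lambda>\<omega>. (restrict (\<lambda>i. \<omega> i) (nb u), restrict (\<lambda>i. \<omega> i) (nb v))) -` (Xa \<times> Xb) \<inter> space PP = Mset u \<inter> Mset v"
    using ea eb by auto
  show ?thesis using indep_varD[OF ind Xa Xb] unfolding ea eb eab .
qed

end



lemma xf_nonneg: "0 \<le> p \<Longrightarrow> p \<le> 1 \<Longrightarrow> p \<le> z \<Longrightarrow> 0 \<le> xf p z"
  unfolding xf_def by (auto intro!: divide_nonneg_pos)

lemma xf_bound: "0 \<le> p \<Longrightarrow> p \<le> 1 \<Longrightarrow> p \<le> z \<Longrightarrow> (1 - p) * xf p z \<le> 4/3 * z - p"
  unfolding xf_def by auto

context GOP begin

definition g0 :: "('a \<Rightarrow> real) \<Rightarrow> 'a set \<Rightarrow> real" where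
  "g0 c S = Min (sum c ` {Q. cover Q \<and> S \<subseteq> Q})"

definition QS :: "('a \<Rightarrow> real) \<Rightarrow> 'a set \<Rightarrow> 'a set" where
  "QS c S = (SOME Q. cover Q \<and> S \<subseteq> Q \<and> sum c Q = g0 c S)"

lemma QS: assumes "S \<subseteq> V" shows "cover (QS c S) \<and> S \<subseteq> QS c S \<and> sum c (QS c S) = g0 c S"
proof -
  have fin: "finite (sum c ` {Q. cover Q \<and> S \<subseteq> Q})"
  proof (rule finite_imageI)
    show "finite {Q. cover Q \<and> S \<subseteq> Q}"
      by (rule finite_subset[of _ "Pow V"]) (use finV in \<open>auto simp: cover_def\<close>)
  qed
  have "cover V" unfolding cover_def using edges by auto
  then have ne: "sum c ` {Q. cover Q \<and> S \<subseteq> Q} \<noteq> {}" using assms by auto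
  have "g0 c S \<in> sum c ` {Q. cover Q \<and> S \<subseteq> Q}" unfolding g0_def using fin ne by (rule Min_in)
  then have "\<exists>Q. cover Q \<and> S \<subseteq> Q \<and> sum c Q = g0 c S" by auto
  then show ?thesis unfolding QS_def by (rule someI_ex)
qed

lemma opt_eq: "opt_cost V E l r c w = g0 c (Mw w)"
proof -
  have "{Q. feasible V E l r w Q} = {Q. cover Q \<and> Mw w \<subseteq> Q}"
    unfolding feas_char Mw_def by (auto simp: mandatory_def)
  then show ?thesis unfolding opt_cost_def g0_def by simp
qed

lemma main:
  assumes c: "\<forall>v\<in>V. c v \<ge> 0" and bip: "bipartite V E" and best: "bestvc_cover V E l r c d C"
  shows "(\<integral>w. vc_alg_cost V E l r c C w \<partial>PP) \<le> 4/3 * (\<integral>w. opt_cost V E l r c w \<partial>PP)"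
proof -
  interpret prob_space PP by (rule prob_PP)
  define p where "p v = mand_prob V E l r d v" for v
  have p_meas: "p v = measure PP (Mset v)" for v unfolding p_def mand_prob_def Mset_def by simp
  define ind where "ind v S = (if v \<in> S then 1 else 0 :: real)" for v :: 'a and S
  have int_ind: "(\<integral>w. ind v (Mw w) \<partial>PP) = p v" for v
  proof -
    have "(\<integral>w. ind v (Mw w) \<partial>PP) = (\<integral>w. indicator (Mset v) w \<partial>PP)"
      by (intro Bochner_Integration.integral_cong)
         (auto simp: ind_def Mw_def Mset_def indicator_def mandatory_def)
    also have "\<dots> = p v" using p_meas Mset_sets by (simp add: Int_absorb2 sets.sets_into_space)
    finally show ?thesis .
  qed
  define z where "z v = (\<integral>w. ind v (QS c (Mw w)) \<partial>PP)" for v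
  have QSw: "cover (QS c (Mw w)) \<and> Mw w \<subseteq> QS c (Mw w) \<and> sum c (QS c (Mw w)) = g0 c (Mw w)" for w
    using QS Mw_sub by blast
  have ind01: "0 \<le> ind v S" "ind v S \<le> 1" for v S unfolding ind_def by auto
  have p01: "0 \<le> p v" "p v \<le> 1" for v using p_meas by auto
  have zp: "p v \<le> z v" for v
  proof -
    have "(\<integral>w. ind v (Mw w) \<partial>PP) \<le> z v" unfolding z_def
      using QSw by (intro integral_mono comp_int) (auto simp: ind_def)
    then show ?thesis using int_ind by simp
  qed
  have z1: "z v \<le> 1" for v
  proof -
    have "z v \<le> (\<integral>w. 1 \<partial>PP)" unfolding z_def
      using ind01 by (intro integral_mono comp_int) auto
    then show ?thesis by (simp add: prob_space)
  qed
  have lhs: "(\<integral>w. vc_alg_cost V E l r c C w \<partial>PP) = sum c C + (\<Sum>v\<in>V-C. c v * p v)"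
  proof -
    have "vc_alg_cost V E l r c C w = sum c C + (\<Sum>v\<in>V-C. c v * ind v (Mw w))" for w
    proof -
      have "sum c {v\<in>V-C. mandatory V E l r w v} = (\<Sum>v\<in>V-C. if mandatory V E l r w v then c v else 0)"
        using finV by (intro sum.inter_filter) auto
      also have "\<dots> = (\<Sum>v\<in>V-C. c v * ind v (Mw w))"
        by (intro sum.cong) (auto simp: ind_def Mw_def)
      finally show ?thesis unfolding vc_alg_cost_def by simp
    qed
    then have "(\<integral>w. vc_alg_cost V E l r c C w \<partial>PP) = (\<integral>w. sum c C + (\<Sum>v\<in>V-C. c v * ind v (Mw w)) \<partial>PP)"
      by simp
    also have "\<dots> = sum c C + (\<Sum>v\<in>V-C. c v * p v)"
    proof -
      have i1: "integrable PP (\<lambda>w. c v * ind v (Mw w))" for v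
        using comp_int[where h="\<lambda>S. c v * ind v S"] by simp
      have i2: "integrable PP (\<lambda>w. \<Sum>v\<in>V-C. c v * ind v (Mw w))"
        using i1 by (rule Bochner_Integration.integrable_sum)
      have "(\<integral>w. sum c C + (\<Sum>v\<in>V-C. c v * ind v (Mw w)) \<partial>PP)
          = sum c C + (\<integral>w. (\<Sum>v\<in>V-C. c v * ind v (Mw w)) \<partial>PP)"
        using i2 by (simp add: Bochner_Integration.integral_add prob_space)
      also have "(\<integral>w. (\<Sum>v\<in>V-C. c v * ind v (Mw w)) \<partial>PP) = (\<Sum>v\<in>V-C. c v * (\<integral>w. ind v (Mw w) \<partial>PP))"
        using i1 by (simp add: integral_sum)
      finally show ?thesis using int_ind by simp
    qed
    finally show ?thesis .
  qed
  have rhs: "(\<integral>w. opt_cost V E l r c w \<partial>PP) = (\<Sum>v\<in>V. c v * z v)"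
  proof -
    have "opt_cost V E l r c w = (\<Sum>v\<in>V. c v * ind v (QS c (Mw w)))" for w
    proof -
      have sub: "QS c (Mw w) \<subseteq> V" using QSw[of w] unfolding cover_def by auto
      have "opt_cost V E l r c w = sum c (QS c (Mw w))" using QSw opt_eq by simp
      also have "\<dots> = sum c {v\<in>V. v \<in> QS c (Mw w)}" using sub by (intro arg_cong[where f="sum c"]) auto
      also have "\<dots> = (\<Sum>v\<in>V. if v \<in> QS c (Mw w) then c v else 0)"
        using finV by (intro sum.inter_filter) auto
      also have "\<dots> = (\<Sum>v\<in>V. c v * ind v (QS c (Mw w)))"
        by (intro sum.cong) (auto simp: ind_def)
      finally show ?thesis .
    qed
    then have "(\<integral>w. opt_cost V E l r c w \<partial>PP) = (\<integral>w. (\<Sum>v\<in>V. c v * ind v (QS c (Mw w))) \<partial>PP)"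
      by simp
    also have "\<dots> = (\<Sum>v\<in>V. c v * z v)"
    proof -
      have "integrable PP (\<lambda>w. c v * ind v (QS c (Mw w)))" for v
        using comp_int[where h="\<lambda>S. c v * ind v (QS c S)"] by simp
      then show ?thesis unfolding z_def by (simp add: integral_sum)
    qed
    finally show ?thesis .
  qed
  obtain A where A: "A \<subseteq> V" "\<forall>(u, v) \<in> E. (u \<in> A \<longleftrightarrow> v \<notin> A)"
    using bip unfolding bipartite_def by blast
  have zedge: "z u + z v \<ge> 1 + p u * p v" if e: "(u, v) \<in> E" for u v
  proof -
    have uv: "u \<in> V" "v \<in> V" using e edges by auto
    have disj: "nb u \<inter> nb v = {}"
    proof (rule ccontr)
      assume "nb u \<inter> nb v \<noteq> {}"
      then obtain y where y: "y \<in> nb u" "y \<in> nb v" by auto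
      have "(y \<in> A \<longleftrightarrow> u \<notin> A)" using y(1) A(2) unfolding nb_def by auto
      moreover have "(y \<in> A \<longleftrightarrow> v \<notin> A)" using y(2) A(2) unfolding nb_def by auto
      moreover have "(u \<in> A \<longleftrightarrow> v \<notin> A)" using e A(2) by auto
      ultimately show False by blast
    qed
    have "(\<integral>w. ind u (Mw w) * ind v (Mw w) \<partial>PP) = (\<integral>w. indicator (Mset u \<inter> Mset v) w \<partial>PP)"
      by (intro Bochner_Integration.integral_cong)
         (auto simp: ind_def Mw_def Mset_def indicator_def mandatory_def)
    also have "\<dots> = measure PP (Mset u \<inter> Mset v)"
      using Mset_sets by (simp add: Int_absorb2 sets.sets_into_space)
    also have "\<dots> = p u * p v" using Mset_indep[OF uv disj] p_meas by simp
    finally have pr: "(\<integral>w. ind u (Mw w) * ind v (Mw w) \<partial>PP) = p u * p v" .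
    have pt: "1 + ind u (Mw w) * ind v (Mw w) \<le> ind u (QS c (Mw w)) + ind v (QS c (Mw w))" for w
      using QSw[of w] e unfolding cover_def ind_def by auto
    have "(\<integral>w. 1 + ind u (Mw w) * ind v (Mw w) \<partial>PP) \<le> (\<integral>w. ind u (QS c (Mw w)) + ind v (QS c (Mw w)) \<partial>PP)"
      using pt by (intro integral_mono) (auto intro!: comp_int[where h = "\<lambda>S. 1 + ind u S * ind v S"]
                                               comp_int[where h = "\<lambda>S. ind u (QS c S) + ind v (QS c S)"])
    moreover have "(\<integral>w. 1 + ind u (Mw w) * ind v (Mw w) \<partial>PP) = 1 + p u * p v"
      using pr comp_int[where h = "\<lambda>S. ind u S * ind v S"] by (simp add: prob_space)
    moreover have "(\<integral>w. ind u (QS c (Mw w)) + ind v (QS c (Mw w)) \<partial>PP) = z u + z v"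
      unfolding z_def using comp_int[where h="\<lambda>S. ind u (QS c S)"] comp_int[where h="\<lambda>S. ind v (QS c S)"]
      by (simp add: Bochner_Integration.integral_add)
    ultimately show ?thesis by simp
  qed
  define x where "x v = min 1 (xf (p v) (z v))" for v
  define W where "W v = (1 - p v) * c v" for v
  have x01: "0 \<le> x v \<and> x v \<le> 1" for v
    unfolding x_def using xf_nonneg[OF p01 zp] by auto
  have xedge: "x u + x v \<ge> 1" if e: "(u, v) \<in> E" for u v
  proof -
    have "xf (p u) (z u) + xf (p v) (z v) \<ge> 1"
      using edge_ineq[OF p01(1) p01(2) p01(1) p01(2) zp zp] zedge[OF e] by blast
    then show ?thesis unfolding x_def using xf_nonneg[OF p01 zp, of u] xf_nonneg[OF p01 zp, of v] by auto
  qed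
  have r1: "\<forall>(u, v) \<in> E. u \<in> V \<and> v \<in> V \<and> (u \<in> A \<longleftrightarrow> v \<notin> A) \<and> x u + x v \<ge> 1"
  proof (intro ballI, clarify)
    fix u v assume e: "(u, v) \<in> E"
    show "u \<in> V \<and> v \<in> V \<and> (u \<in> A \<longleftrightarrow> v \<notin> A) \<and> x u + x v \<ge> 1"
      using e edges A(2) xedge[OF e] by auto
  qed
  have r2: "\<forall>v\<in>V. W v \<ge> 0"
  proof
    fix v assume "v \<in> V"
    then have "0 \<le> c v" using c by auto
    moreover have "0 \<le> 1 - p v" using p01(2)[of v] by simp
    ultimately show "W v \<ge> 0" unfolding W_def by simp
  qed
  have r3: "\<forall>v\<in>V. 0 \<le> x v \<and> x v \<le> 1" using x01 by blast
  obtain C' where C': "C' \<subseteq> V" "\<forall>(u, v) \<in> E. u \<in> C' \<or> v \<in> C'" "sum W C' \<le> (\<Sum>v\<in>V. W v * x v)"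
    using rounding[OF finV r1 r2 r3] by blast
  have bestC: "sum W C \<le> sum W C'" "C \<subseteq> V"
  proof -
    have vc: "vertex_cover V E C'" unfolding vertex_cover_def using C'(1,2) by blast
    have "(\<Sum>v\<in>C. (1 - mand_prob V E l r d v) * c v) \<le> (\<Sum>v\<in>C'. (1 - mand_prob V E l r d v) * c v)"
      using best vc unfolding bestvc_cover_def by blast
    then show "sum W C \<le> sum W C'" unfolding W_def p_def .
    show "C \<subseteq> V" using best unfolding bestvc_cover_def vertex_cover_def by blast
  qed
  have Wx: "W v * x v \<le> c v * (4/3 * z v - p v)" if "v \<in> V" for v
  proof -
    have "x v \<le> xf (p v) (z v)" unfolding x_def by simp
    then have "(1 - p v) * x v \<le> (1 - p v) * xf (p v) (z v)" using p01 by (intro mult_left_mono) auto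
    also have "\<dots> \<le> 4/3 * z v - p v" using xf_bound[OF p01 zp] .
    finally have "c v * ((1 - p v) * x v) \<le> c v * (4/3 * z v - p v)" using c that by (intro mult_left_mono) auto
    moreover have "W v * x v = c v * ((1 - p v) * x v)" unfolding W_def by (simp add: ac_simps)
    ultimately show ?thesis by linarith
  qed
  have split1: "sum c C = (\<Sum>v\<in>C. c v * p v) + sum W C"
  proof -
    have "c v = c v * p v + W v" for v unfolding W_def by (simp add: left_diff_distrib)
    then have "sum c C = (\<Sum>v\<in>C. c v * p v + W v)" by (intro sum.cong) auto
    then show ?thesis by (simp add: sum.distrib)
  qed
  have split2: "(\<Sum>v\<in>V. c v * p v) = (\<Sum>v\<in>C. c v * p v) + (\<Sum>v\<in>V-C. c v * p v)"
    using finV bestC(2) by (simp add: sum.subset_diff)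
  have "(\<integral>w. vc_alg_cost V E l r c C w \<partial>PP) = (\<Sum>v\<in>V. c v * p v) + sum W C"
    using lhs split1 split2 by simp
  also have "\<dots> \<le> (\<Sum>v\<in>V. c v * p v) + (\<Sum>v\<in>V. W v * x v)" using bestC C' by simp
  also have "\<dots> \<le> (\<Sum>v\<in>V. c v * p v) + (\<Sum>v\<in>V. c v * (4/3 * z v - p v))"
    using Wx by (intro add_left_mono sum_mono) auto
  also have "\<dots> = 4/3 * (\<Sum>v\<in>V. c v * z v)"
  proof -
    have eq: "c v * p v + c v * (4/3 * z v - p v) = 4/3 * (c v * z v)" for v by (simp add: right_diff_distrib)
    have "(\<Sum>v\<in>V. c v * p v + c v * (4/3 * z v - p v)) = (\<Sum>v\<in>V. 4/3 * (c v * z v))"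
      by (intro sum.cong refl eq)
    then show ?thesis by (simp add: sum.distrib sum_distrib_left)
  qed
  also have "\<dots> = 4/3 * (\<integral>w. opt_cost V E l r c w \<partial>PP)" using rhs by simp
  finally show ?thesis .
qed

end


theorem theorem4p1:
  fixes V :: "'a set" and E :: "('a \<times> 'a) set"
    and l r c :: "'a \<Rightarrow> real" and d :: "'a \<Rightarrow> real measure" and C :: "'a set"
  assumes "finite V"
    and "\<forall>(u, v) \<in> E. u \<in> V \<and> v \<in> V \<and> u \<noteq> v"
    and "bipartite V E"
    and "\<forall>v \<in> V. c v \<ge> 0"
    and "\<forall>v \<in> V. l v < r v"
    and "\<forall>v \<in> V. prob_space (d v) \<and> sets (d v) = sets borel"
    and "\<forall>v \<in> V. \<forall>x. measure (d v) {x} = 0"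
    and "\<forall>v \<in> V. measure (d v) {l v<..<r v} = 1"
    and "\<forall>v \<in> V. \<forall>a b. l v \<le> a \<and> a < b \<and> b \<le> r v \<longrightarrow> measure (d v) {a<..<b} > 0"
    and "\<forall>(u, v) \<in> E. {l u<..<r u} \<inter> {l v<..<r v} \<noteq> {}
           \<and> \<not> {l u<..<r u} \<subseteq> {l v<..<r v} \<and> \<not> {l v<..<r v} \<subseteq> {l u<..<r u}"
    and "bestvc_cover V E l r c d C"
  shows "(\<integral>w. vc_alg_cost V E l r c C w \<partial>(PiM V d))
           \<le> 4 / 3 * (\<integral>w. opt_cost V E l r c w \<partial>(PiM V d))"
  proof -
  interpret GOP V E l r d
  proof unfold_locales
    show "finite V" by (rule assms(1))
    show "\<forall>(u, v) \<in> E. u \<in> V \<and> v \<in> V \<and> u \<noteq> v" by (rule assms(2))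
    show "\<forall>v \<in> V. l v < r v" by (rule assms(5))
    show "\<forall>(u, v) \<in> E. {l u<..<r u} \<inter> {l v<..<r v} \<noteq> {}" using assms(10) by fast
    show "\<forall>v \<in> V. prob_space (d v) \<and> sets (d v) = sets borel" by (rule assms(6))
  qed
  show ?thesis by (rule main[OF assms(4,3,11)])
qed

end
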